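(* Let $p\ge3$ be a prime, let $U$ be the probability distribution on $\mathbb{F}_p$ that assigns probability $1/2$ to each of $0$ and $1$, and let $D$ be a probability distribution on $\mathbb{F}_p$ such that $|D(x)-p^{-1}|\le p^{-2}$ for each $x\in\mathbb{F}_p$. Then there exists a probability distribution $E$ on $\mathbb{F}_p$ such that $D=U+E$.
   Context: For probability distributions $D',D''$ on a finite abelian group $G$, $D'+D''$ denotes their convolution: $(D'+D'')(x)=\sum_{y+z=x}D'(y)D''(z)$, i.e. the distribution of the sum of independent random variables with distributions $D'$ and $D''$. *)

theory Defs
  imports Complex_Main "HOL-Computational_Algebra.Primes"
begin

text \<open>F_p is represented by the residues {0..<p} (type nat) with addition mod p.
A probability distribution on F_p is a function nat => real, nonnegative on {0..<p},
summing to 1 over {0..<p}; values outside {0..<p} are irrelevant.\<close>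

definition is_distr :: "nat \<Rightarrow> (nat \<Rightarrow> real) \<Rightarrow> bool" where
  "is_distr p D \<longleftrightarrow> (\<forall>x<p. 0 \<le> D x) \<and> (\<Sum>x<p. D x) = 1"

text \<open>Convolution on Z/pZ: (D'+D'')(x) = sum over y+z = x (mod p) of D'(y) D''(z).\<close>
definition conv :: "nat \<Rightarrow> (nat \<Rightarrow> real) \<Rightarrow> (nat \<Rightarrow> real) \<Rightarrow> nat \<Rightarrow> real" where
  "conv p D1 D2 x = (\<Sum>y<p. \<Sum>z<p. if (y + z) mod p = x then D1 y * D2 z else 0)"

definition unif01 :: "nat \<Rightarrow> real" where
  "unif01 x = (if x = 0 \<or> x = 1 then 1/2 else 0)"

end

theory Submission
  imports Defs
begin

lemma altsum_odd: "(\<Sum>j<Suc (2*k). (-1::real)^j) = 1"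
  by (induction k) (auto simp: sum.lessThan_Suc)

lemma shift_sum:
  fixes h :: "int \<Rightarrow> real" and p :: nat
  assumes per: "\<And>i. h (i + int p) = h i" and p: "p > 0"
  shows "(\<Sum>x<p. h (int x - 1)) = (\<Sum>x<p. h (int x))"
proof -
  obtain n where n: "p = Suc n" using p by (cases p) auto
  have "(\<Sum>x<p. h (int x - 1)) = h (-1) + (\<Sum>x<n. h (int x))"
    unfolding n by (subst sum.lessThan_Suc_shift) simp
  also have "h (-1) = h (int n)" using per[of "-1"] n by simp
  also have "h (int n) + (\<Sum>x<n. h (int x)) = (\<Sum>x<p. h (int x))"
    unfolding n by (simp add: sum.lessThan_Suc)
  finally show ?thesis .
qed

lemma shift_sum_j:
  fixes h :: "int \<Rightarrow> real" and p :: nat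
  assumes per: "\<And>i. h (i + int p) = h i" and p: "p > 0"
  shows "(\<Sum>x<p. h (int x - int j)) = (\<Sum>x<p. h (int x))"
proof (induction j)
  case 0 then show ?case by simp
next
  case (Suc j)
  have "(\<Sum>x<p. h (int x - int (Suc j))) = (\<Sum>x<p. (\<lambda>i. h (i - int j)) (int x - 1))"
    by (simp add: algebra_simps)
  also have "\<dots> = (\<Sum>x<p. (\<lambda>i. h (i - int j)) (int x))"
  proof (rule shift_sum[OF _ p])
    fix i show "h (i + int p - int j) = h (i - int j)"
      using per[of "i - int j"] by (simp add: algebra_simps)
  qed
  finally show ?case using Suc by simp
qed

theorem lemma3p2:
  fixes p :: nat and D :: "nat \<Rightarrow> real"
  assumes "prime p" and "p \<ge> 3"
    and "is_distr p D"
    and "\<forall>x<p. \<bar>D x - 1 / real p\<bar> \<le> 1 / (real p)^2"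
  shows "\<exists>E. is_distr p E \<and> (\<forall>x<p. D x = conv p unif01 E x)"
proof -
  have p0: "p > 0" using assms(2) by simp
  have oddp: "odd p" using assms(1,2) prime_odd_nat by auto
  then obtain k where k: "p = Suc (2*k)" by (metis oddE Suc_eq_plus1)
  define d :: "int \<Rightarrow> real" where "d i = D (nat (i mod int p))" for i
  have dper: "d a = d b" if "a mod int p = b mod int p" for a b
    using that by (simp add: d_def)
  have dp: "d (i + int p) = d i" for i by (rule dper) simp
  have dnat: "d (int x) = D x" if "x < p" for x
    using that by (simp add: d_def)
  have dbound: "\<bar>d i - 1 / real p\<bar> \<le> 1 / (real p)^2" for i
  proof -
    have "nat (i mod int p) < p" using p0 by (simp add: nat_less_iff)
    then show ?thesis using assms(4) by (simp add: d_def)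
  qed
  define E :: "nat \<Rightarrow> real" where "E x = (\<Sum>j<p. (-1)^j * d (int x - int j))" for x
  have Esum: "(\<Sum>x<p. E x) = 1"
  proof -
    have "(\<Sum>x<p. E x) = (\<Sum>j<p. (-1)^j * (\<Sum>x<p. d (int x - int j)))"
      unfolding E_def sum_distrib_left by (rule sum.swap)
    also have "\<dots> = (\<Sum>j<p. (-1)^j * (\<Sum>x<p. d (int x)))"
      using shift_sum_j[of d p, OF dp p0] by simp
    also have "(\<Sum>x<p. d (int x)) = 1"
      using assms(3) dnat unfolding is_distr_def by simp
    finally show ?thesis using altsum_odd[of k] k by (simp add: sum_distrib_right[symmetric])
  qed
  have Enn: "0 \<le> E x" for x
  proof -
    have "E x = (\<Sum>j<p. (-1)^j * (1 / real p)) + (\<Sum>j<p. (-1)^j * (d (int x - int j) - 1 / real p))"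
      unfolding E_def by (simp add: sum.distrib[symmetric] algebra_simps)
    also have "(\<Sum>j<p. (-1)^j * (1 / real p)) = (\<Sum>j<p. (-1::real)^j) * (1 / real p)"
      by (rule sum_distrib_right[symmetric])
    also have "\<dots> = 1 / real p"
      using altsum_odd[of k] k by simp
    finally have e: "E x = 1 / real p + (\<Sum>j<p. (-1)^j * (d (int x - int j) - 1 / real p))" .
    have "\<bar>\<Sum>j<p. (-1::real)^j * (d (int x - int j) - 1 / real p)\<bar>
        \<le> (\<Sum>j<p. \<bar>(-1::real)^j * (d (int x - int j) - 1 / real p)\<bar>)"
      by (rule sum_abs)
    also have "\<dots> \<le> (\<Sum>j<p. 1 / (real p)^2)"
      by (rule sum_mono) (simp add: abs_mult dbound)
    also have "\<dots> = 1 / real p" using p0 by (simp add: power2_eq_square)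
    finally show ?thesis using e by linarith
  qed
  have rec: "E x + E ((x + p - 1) mod p) = 2 * D x" if x: "x < p" for x
  proof -
    define f where "f j = (-1::real)^j * d (int x - int j)" for j
    have "E ((x + p - 1) mod p) = (\<Sum>j<p. (-1)^j * d (int x - int (Suc j)))"
      unfolding E_def
    proof (rule sum.cong[OF refl])
      fix j assume "j \<in> {..<p}"
      have mm: "(int ((x + p - 1) mod p) - int j) mod int p = (int x - int (Suc j)) mod int p"
      proof -
        have a: "int ((x + p - 1) mod p) = (int x + int p - 1) mod int p"
          using p0 by (simp add: of_nat_mod of_nat_diff)
        have "(int ((x + p - 1) mod p) - int j) mod int p = ((int x + int p - 1) - int j) mod int p"
          unfolding a by (rule mod_diff_left_eq)
        also have "(int x + int p - 1) - int j = (int x - int (Suc j)) + int p" by simp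
        also have "((int x - int (Suc j)) + int p) mod int p = (int x - int (Suc j)) mod int p"
          by (rule mod_add_self2)
        finally show ?thesis .
      qed
      show "(-1)^j * d (int ((x + p - 1) mod p) - int j) = (-1)^j * d (int x - int (Suc j))"
        using dper[OF mm] by simp
    qed
    also have "\<dots> = - (\<Sum>j<p. f (Suc j))" unfolding f_def by (simp add: sum_negf)
    also have "(\<Sum>j<p. f (Suc j)) = (\<Sum>j<Suc p. f j) - f 0"
      by (simp only: sum.lessThan_Suc_shift)
    also have "(\<Sum>j<Suc p. f j) = E x + f p" unfolding E_def f_def by simp
    finally have "E x + E ((x + p - 1) mod p) = f 0 - f p" by simp
    also have "f p = - d (int x)" unfolding f_def using oddp dp[of "int x - int p"] by simp
    finally show ?thesis unfolding f_def using dnat[OF x] by simp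
  qed
  have conv_eq: "conv p unif01 E x = (E x + E ((x + p - 1) mod p)) / 2" if x: "x < p" for x
  proof -
    define g where "g y = (\<Sum>z<p. if (y + z) mod p = x then unif01 y * E z else 0)" for y :: nat
    have "conv p unif01 E x = (\<Sum>y\<in>{0::nat,1}. g y)"
      unfolding conv_def g_def[symmetric]
    proof (rule sum.mono_neutral_right)
      show "finite {..<p}" by simp
      show "{0, 1} \<subseteq> {..<p}" using assms(2) by auto
      show "\<forall>i\<in>{..<p} - {0, 1}. g i = 0"
      proof
        fix i assume "i \<in> {..<p} - {0, 1}"
        then have "unif01 i = 0" by (auto simp: unif01_def)
        then show "g i = 0" unfolding g_def by (intro sum.neutral) simp
      qed
    qed
    also have "\<dots> = g 0 + g 1" by simp
    also have "g 0 = E x / 2"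
    proof -
      note g_def[simp]
      have "g 0 = (\<Sum>z<p. if z = x then E z / 2 else 0)"
        unfolding g_def by (rule sum.cong) (auto simp: unif01_def)
      then show ?thesis using x by simp
    qed
    also have "g 1 = E ((x + p - 1) mod p) / 2"
    proof -
      note g_def[simp]
      have xm: "(x + p - 1) mod p = (if x = 0 then p - 1 else x - 1)"
      proof (cases "x = 0")
        case True then show ?thesis using p0 by simp
      next
        case False
        then have e: "x + p - 1 = (x - 1) + p" by simp
        have "((x - 1) + p) mod p = x - 1" using x by simp
        then show ?thesis using False e by simp
      qed
      have c: "(1 + z) mod p = x \<longleftrightarrow> z = (x + p - 1) mod p" if z: "z < p" for z
      proof (cases "z = p - 1")
        case True
        then show ?thesis using p0 x xm by (auto split: if_splits)
      next
        case False
        then have "1 + z < p" using z by simp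
        then show ?thesis using x z p0 xm
          by (cases "x = 0") (auto simp: mod_if)
      qed
      have "g 1 = (\<Sum>z<p. if z = (x + p - 1) mod p then E z / 2 else 0)"
        unfolding g_def
      proof (rule sum.cong[OF refl])
        fix z assume "z \<in> {..<p}"
        then have z: "z < p" by simp
        show "(if (1 + z) mod p = x then unif01 1 * E z else 0) =
              (if z = (x + p - 1) mod p then E z / 2 else 0)"
          by (simp only: c[OF z]) (simp add: unif01_def)
      qed
      then show ?thesis using p0 by simp
    qed
    finally show ?thesis by simp
  qed
  show ?thesis
  proof (intro exI conjI allI impI)
    show "is_distr p E" unfolding is_distr_def using Esum Enn by simp
    fix x assume x: "x < p"
    show "D x = conv p unif01 E x" using conv_eq[OF x] rec[OF x] by simp
  qed
qed

end
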